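(* If $\mathbf A$ is a complete perfect DqRA, then $\mathbf A\cong(\mathbf A_+)^+$ as DqRAs, via the map $\psi(a)=\{j\in J^\infty(\mathbf A)\mid j\leqslant a\}$.
   Context: A DqRA is a structure $(A,\wedge,\vee,\cdot,1,\sim,-,\neg)$ with $(A,\wedge,\vee)$ a distributive lattice, $(A,\cdot,1)$ a monoid, $a\cdot b\leqslant c\iff a\leqslant -(b\cdot{\sim}c)\iff b\leqslant{\sim}(-c\cdot a)$, $\neg\neg a=a$, $\neg(a\wedge b)=\neg a\vee\neg b$, and $\neg(a\cdot b)=\neg a+\neg b$ where $a+b=-({\sim}b\cdot{\sim}a)$. Complete perfect: complete, every element the join of completely join-irreducibles ($J^\infty(\mathbf A)$) below it and meet of completely meet-irreducibles above it. $\kappa(j)=\bigvee\{a\mid j\not\leqslant a\}$. $\mathbf A_+=(J^\infty(\mathbf A),I_1,\preccurlyeq,\circ,{}^\sim,{}^-,{}^\neg)$ with $I_1=\{i\in J^\infty(\mathbf A)\mid i\leqslant1\}$, $a\preccurlyeq b$ iff $b\leqslant a$, $c\in a\circ b$ iff $c\leqslant a\cdot b$, $a^\sim={\sim}\kappa(a)$, $a^-=-\kappa(a)$, $a^\neg=\neg\kappa(a)$. For such a structure $\mathbb W=(W,I,\preccurlyeq,\circ,{}^\sim,{}^-,{}^\neg)$, $\mathbb W^+=(\mathsf{Up}(W,\preccurlyeq),\cap,\cup,\circ,I,\sim,-,\neg)$ where $\mathsf{Up}$ is the set of upsets, $U\circ V=\bigcup\{x\circ y\mid x\in U,y\in V\}$,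 ${\sim}U=\{w\mid w^-\notin U\}$, $-U=\{w\mid w^\sim\notin U\}$, $\neg U=\{w\mid w^\neg\notin U\}$. *)

theory Defs
  imports Main
begin

text \<open>A DqRA on a lattice carried by a type 'a (lattice operations = the
type-class inf/sup/order), with monoid (mult, e), residual-type negations
tld (the tilde), mn (the minus) and the involution ng.\<close>

definition dq_plus :: "('a \<Rightarrow> 'a \<Rightarrow> 'a) \<Rightarrow> ('a \<Rightarrow> 'a) \<Rightarrow> ('a \<Rightarrow> 'a) \<Rightarrow> 'a \<Rightarrow> 'a \<Rightarrow> 'a" where
  "dq_plus mult tld mn a b = mn (mult (tld b) (tld a))"

definition DqRA :: "('a::lattice \<Rightarrow> 'a \<Rightarrow> 'a) \<Rightarrow> 'a \<Rightarrow> ('a \<Rightarrow> 'a) \<Rightarrow> ('a \<Rightarrow> 'a) \<Rightarrow> ('a \<Rightarrow> 'a) \<Rightarrow> bool" where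
  "DqRA mult e tld mn ng \<longleftrightarrow>
     (\<forall>a b c::'a. inf a (sup b c) = sup (inf a b) (inf a c)) \<and>
     (\<forall>a b c. mult (mult a b) c = mult a (mult b c)) \<and>
     (\<forall>a. mult e a = a \<and> mult a e = a) \<and>
     (\<forall>a b c. (mult a b \<le> c \<longleftrightarrow> a \<le> mn (mult b (tld c))) \<and>
              (mult a b \<le> c \<longleftrightarrow> b \<le> tld (mult (mn c) a))) \<and>
     (\<forall>a. ng (ng a) = a) \<and>
     (\<forall>a b. ng (inf a b) = sup (ng a) (ng b)) \<and>
     (\<forall>a b. ng (mult a b) = dq_plus mult tld mn (ng a) (ng b))"

definition cjirr :: "'a::complete_lattice \<Rightarrow> bool" where
  "cjirr j \<longleftrightarrow> (\<forall>S. j = Sup S \<longrightarrow> j \<in> S)"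

definition cmirr :: "'a::complete_lattice \<Rightarrow> bool" where
  "cmirr m \<longleftrightarrow> (\<forall>S. m = Inf S \<longrightarrow> m \<in> S)"

definition Jinf :: "'a::complete_lattice set" where
  "Jinf = {j. cjirr j}"

definition perfect_lattice :: "'a::complete_lattice itself \<Rightarrow> bool" where
  "perfect_lattice _ \<longleftrightarrow>
     (\<forall>a::'a. a = Sup {j. cjirr j \<and> j \<le> a} \<and> a = Inf {m. cmirr m \<and> a \<le> m})"

definition kappa :: "'a::complete_lattice \<Rightarrow> 'a" where
  "kappa j = Sup {a. \<not> j \<le> a}"

text \<open>The frame A_+ = (Jinf, I_1, \<preccurlyeq>, \<circ>, ^\<sim>, ^-, ^\<not>).\<close>

definition plus_le :: "'a::complete_lattice \<Rightarrow> 'a \<Rightarrow> bool" where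
  "plus_le a b \<longleftrightarrow> b \<le> a"

definition plus_I :: "'a::complete_lattice \<Rightarrow> 'a set" where
  "plus_I e = {i \<in> Jinf. i \<le> e}"

definition plus_comp :: "('a::complete_lattice \<Rightarrow> 'a \<Rightarrow> 'a) \<Rightarrow> 'a \<Rightarrow> 'a \<Rightarrow> 'a set" where
  "plus_comp mult a b = {c \<in> Jinf. c \<le> mult a b}"

definition plus_un :: "('a::complete_lattice \<Rightarrow> 'a) \<Rightarrow> 'a \<Rightarrow> 'a" where
  "plus_un f a = f (kappa a)"

text \<open>Complex algebra W^+ of a frame (W, I, r, comp, ...), on upsets.\<close>

definition Up :: "'w set \<Rightarrow> ('w \<Rightarrow> 'w \<Rightarrow> bool) \<Rightarrow> 'w set set" where
  "Up W r = {U. U \<subseteq> W \<and> (\<forall>x\<in>U. \<forall>y\<in>W. r x y \<longrightarrow> y \<in> U)}"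

definition cx_comp :: "('w \<Rightarrow> 'w \<Rightarrow> 'w set) \<Rightarrow> 'w set \<Rightarrow> 'w set \<Rightarrow> 'w set" where
  "cx_comp cmp U V = \<Union>{cmp x y | x y. x \<in> U \<and> y \<in> V}"

definition cx_neg :: "'w set \<Rightarrow> ('w \<Rightarrow> 'w) \<Rightarrow> 'w set \<Rightarrow> 'w set" where
  "cx_neg W f U = {w \<in> W. f w \<notin> U}"

definition psi :: "'a::complete_lattice \<Rightarrow> 'a set" where
  "psi a = {j \<in> Jinf. j \<le> a}"

end

theory Submission
  imports Defs
begin

lemma cmirr_prime:
  fixes m :: "'a::complete_lattice"
  assumes D: "\<And>x y z::'a. inf x (sup y z) = sup (inf x y) (inf x z)"
    and m: "cmirr m" and le: "inf a b \<le> m"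
  shows "a \<le> m \<or> b \<le> m"
proof -
  have "m = sup m (inf a b)" using le by (simp add: sup_absorb1)
  also have "\<dots> = inf (sup m a) (sup m b)" by (rule distrib_imp1[OF D])
  also have "\<dots> = Inf {sup m a, sup m b}" by simp
  finally have "m \<in> {sup m a, sup m b}" using m unfolding cmirr_def by blast
  thus ?thesis by (metis insert_iff singletonD sup.absorb_iff1)
qed

lemma kappa_prop:
  fixes j :: "'a::complete_lattice"
  assumes D: "\<And>x y z::'a. inf x (sup y z) = sup (inf x y) (inf x z)"
    and P: "perfect_lattice TYPE('a)" and j: "cjirr j"
  shows "\<not> j \<le> kappa j"
proof -
  define jm where "jm = Sup {k. cjirr k \<and> k < j}"
  have "jm \<noteq> j"
  proof
    assume "jm = j"
    hence "j \<in> {k. cjirr k \<and> k < j}" using j unfolding cjirr_def jm_def by metis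
    thus False by simp
  qed
  moreover have "jm \<le> j" unfolding jm_def by (auto intro: Sup_least)
  ultimately have nj: "\<not> j \<le> jm" by simp
  have "jm = Inf {m. cmirr m \<and> jm \<le> m}" using P unfolding perfect_lattice_def by blast
  then obtain m where m: "cmirr m" "jm \<le> m" "\<not> j \<le> m"
    using nj by (metis (mono_tags, lifting) le_Inf_iff mem_Collect_eq)
  have "kappa j \<le> m" unfolding kappa_def
  proof (rule Sup_least)
    fix a assume "a \<in> {a. \<not> j \<le> a}"
    hence na: "\<not> j \<le> a" by simp
    have "inf j a \<noteq> j" using na by (metis inf.absorb_iff1)
    have "inf j a = Sup {k. cjirr k \<and> k \<le> inf j a}" using P unfolding perfect_lattice_def by blast
    also have "\<dots> \<le> jm" unfolding jm_def
    proof (rule Sup_mono, safe)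
      fix k assume k: "cjirr k" "k \<le> inf j a"
      have "k < j"
      proof -
        have "k \<le> j" using k by simp
        moreover have "k \<noteq> j" using k na by (metis le_inf_iff)
        ultimately show ?thesis by simp
      qed
      thus "\<exists>b\<in>{k. cjirr k \<and> k < j}. k \<le> b" using k by blast
    qed
    finally have "inf j a \<le> m" using m by simp
    thus "a \<le> m" using cmirr_prime[OF D m(1)] m(3) by blast
  qed
  thus ?thesis using m(3) by (metis order_trans)
qed

lemma kappa_iff:
  fixes j :: "'a::complete_lattice"
  assumes D: "\<And>x y z::'a. inf x (sup y z) = sup (inf x y) (inf x z)"
    and P: "perfect_lattice TYPE('a)" and j: "cjirr j"
  shows "\<not> j \<le> a \<longleftrightarrow> a \<le> kappa j"
proof
  assume "\<not> j \<le> a" thus "a \<le> kappa j" unfolding kappa_def by (auto intro: Sup_upper)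
next
  assume "a \<le> kappa j" thus "\<not> j \<le> a" using kappa_prop[OF D P j] by (metis order_trans)
qed

lemma cjp:
  fixes j :: "'a::complete_lattice"
  assumes D: "\<And>x y z::'a. inf x (sup y z) = sup (inf x y) (inf x z)"
    and P: "perfect_lattice TYPE('a)" and j: "cjirr j" and le: "j \<le> Sup S"
  shows "\<exists>s\<in>S. j \<le> s"
proof (rule ccontr)
  assume "\<not> ?thesis"
  hence "\<forall>s\<in>S. s \<le> kappa j" using kappa_iff[OF D P j] by blast
  hence "Sup S \<le> kappa j" by (simp add: Sup_least)
  thus False using le kappa_prop[OF D P j] by (metis order_trans)
qed

lemma kappa_cmirr:
  fixes j :: "'a::complete_lattice"
  assumes D: "\<And>x y z::'a. inf x (sup y z) = sup (inf x y) (inf x z)"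
    and P: "perfect_lattice TYPE('a)" and j: "cjirr j"
  shows "cmirr (kappa j)"
  unfolding cmirr_def
proof (intro allI impI)
  fix S assume S: "kappa j = Inf S"
  show "kappa j \<in> S"
  proof (rule ccontr)
    assume n: "kappa j \<notin> S"
    have "\<forall>s\<in>S. j \<le> s"
    proof
      fix s assume s: "s \<in> S"
      have "kappa j \<le> s" using S s by (simp add: Inf_lower)
      hence "\<not> s \<le> kappa j" using n s by (metis order_antisym)
      thus "j \<le> s" using kappa_iff[OF D P j] by blast
    qed
    hence "j \<le> kappa j" using S by (simp add: le_Inf_iff)
    thus False using kappa_prop[OF D P j] by simp
  qed
qed

lemma anti_neg:
  fixes f g :: "'a::complete_lattice \<Rightarrow> 'a"
  assumes D: "\<And>x y z::'a. inf x (sup y z) = sup (inf x y) (inf x z)"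
    and P: "perfect_lattice TYPE('a)"
    and G: "\<And>x y. x \<le> f y \<longleftrightarrow> y \<le> g x"
    and fg: "\<And>x. f (g x) = x" and gf: "\<And>x. g (f x) = x"
  shows "psi (f a) = cx_neg Jinf (plus_un g) (psi a)"
proof -
  have fsup: "f (Sup S) = Inf (f ` S)" for S
  proof (rule order_antisym)
    show "f (Sup S) \<le> Inf (f ` S)"
    proof (rule Inf_greatest)
      fix x assume "x \<in> f ` S"
      then obtain s where s: "s \<in> S" "x = f s" by blast
      have "f (Sup S) \<le> f (Sup S)" by simp
      hence "Sup S \<le> g (f (Sup S))" using G by blast
      hence "s \<le> g (f (Sup S))" using s by (meson Sup_upper order_trans)
      thus "f (Sup S) \<le> x" using G s by blast
    qed
    show "Inf (f ` S) \<le> f (Sup S)"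
    proof -
      have "\<forall>s\<in>S. s \<le> g (Inf (f ` S))" using G by (meson Inf_lower image_eqI)
      hence "Sup S \<le> g (Inf (f ` S))" by (simp add: Sup_least)
      thus ?thesis using G by blast
    qed
  qed
  have mono_iff: "f a \<le> kw \<longleftrightarrow> g kw \<le> a" for kw
    using G[of "f a" "g kw"] fg gf by simp
  show ?thesis
  proof (rule set_eqI)
    fix w
    show "w \<in> psi (f a) \<longleftrightarrow> w \<in> cx_neg Jinf (plus_un g) (psi a)"
    proof (cases "cjirr w")
      case False thus ?thesis unfolding psi_def cx_neg_def Jinf_def by simp
    next
      case True
      have cj: "cjirr (g (kappa w))" unfolding cjirr_def
      proof (intro allI impI)
        fix S assume S: "g (kappa w) = Sup S"
        have "kappa w = Inf (f ` S)" using S fg fsup by metis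
        then have "kappa w \<in> f ` S" using kappa_cmirr[OF D P True] unfolding cmirr_def by blast
        then obtain s where "s \<in> S" "kappa w = f s" by blast
        thus "g (kappa w) \<in> S" using gf by simp
      qed
      have "w \<le> f a \<longleftrightarrow> \<not> g (kappa w) \<le> a"
        using kappa_iff[OF D P True, of "f a"] mono_iff by blast
      thus ?thesis using True cj unfolding psi_def cx_neg_def Jinf_def plus_un_def by simp
    qed
  qed
qed

theorem mainTheorem11:
  fixes mult :: "'a::complete_lattice \<Rightarrow> 'a \<Rightarrow> 'a"
    and e :: 'a and tld mn ng :: "'a \<Rightarrow> 'a"
  assumes "DqRA mult e tld mn ng"
    and "perfect_lattice TYPE('a)"
  shows "bij_betw psi (UNIV :: 'a set) (Up Jinf plus_le)
    \<and> (\<forall>a b::'a. psi (inf a b) = psi a \<inter> psi b)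
    \<and> (\<forall>a b::'a. psi (sup a b) = psi a \<union> psi b)
    \<and> (\<forall>a b. psi (mult a b) = cx_comp (plus_comp mult) (psi a) (psi b))
    \<and> psi e = plus_I e
    \<and> (\<forall>a. psi (tld a) = cx_neg Jinf (plus_un mn) (psi a))
    \<and> (\<forall>a. psi (mn a) = cx_neg Jinf (plus_un tld) (psi a))
    \<and> (\<forall>a. psi (ng a) = cx_neg Jinf (plus_un ng) (psi a))"
proof -
  note A = assms(1)[unfolded DqRA_def]
  have D: "\<And>x y z::'a. inf x (sup y z) = sup (inf x y) (inf x z)" using A by blast
  note P = assms(2)
  have R1: "\<And>a b c. mult a b \<le> c \<longleftrightarrow> a \<le> mn (mult b (tld c))" using A by blast
  have R2: "\<And>a b c. mult a b \<le> c \<longleftrightarrow> b \<le> tld (mult (mn c) a)" using A by blast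
  have unit: "\<And>a. mult e a = a" "\<And>a. mult a e = a" using A by auto
  have ngng: "\<And>a. ng (ng a) = a" and nginf: "\<And>a b. ng (inf a b) = sup (ng a) (ng b)" using A by auto
  have mt: "\<And>c. mn (tld c) = c" using R1[of _ e] unit by (metis order_antisym order_refl)
  have tm: "\<And>c. tld (mn c) = c" using R2[of e] unit by (metis order_antisym order_refl)
  have monoL: "\<And>a a' b. a \<le> a' \<Longrightarrow> mult a b \<le> mult a' b"
    using R1 by (metis order_refl order_trans)
  have monoR: "\<And>a b b'. b \<le> b' \<Longrightarrow> mult a b \<le> mult a b'"
    using R2 by (metis order_refl order_trans)
  have mn_anti: "\<And>b b'. b \<le> b' \<Longrightarrow> mn b' \<le> mn b"
  proof -
    fix b b' :: 'a assume bb: "b \<le> b'"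
    have "mult (mn b') b' \<le> mn e" using R1[of "mn b'" b' "mn e"] unit tm by simp
    hence "mult (mn b') b \<le> mn e" using monoR[OF bb] order_trans by blast
    thus "mn b' \<le> mn b" using R1[of "mn b'" b "mn e"] unit tm by simp
  qed
  have tld_anti: "\<And>b b'. b \<le> b' \<Longrightarrow> tld b' \<le> tld b"
  proof -
    fix b b' :: 'a assume bb: "b \<le> b'"
    have "mult b' (tld b') \<le> tld e" using R2[of b' "tld b'" "tld e"] unit mt by simp
    hence "mult b (tld b') \<le> tld e" using monoL[OF bb] order_trans by blast
    thus "tld b' \<le> tld b" using R2[of b "tld b'" "tld e"] unit mt by simp
  qed
  have ng_anti: "\<And>b b'. b \<le> b' \<Longrightarrow> ng b' \<le> ng b"
    by (metis inf.absorb1 nginf sup.cobounded2)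
  have Gt: "\<And>x y. x \<le> tld y \<longleftrightarrow> y \<le> mn x" by (metis mn_anti tld_anti mt tm)
  have Gm: "\<And>x y. x \<le> mn y \<longleftrightarrow> y \<le> tld x" by (metis mn_anti tld_anti mt tm)
  have Gn: "\<And>x y. x \<le> ng y \<longleftrightarrow> y \<le> ng x" by (metis ng_anti ngng)
  have psiSup: "\<And>a::'a. a = Sup (psi a)"
    using P unfolding perfect_lattice_def psi_def Jinf_def by simp
  have supL: "\<And>S b. mult (Sup S) b \<le> Sup {mult s b | s. s \<in> S}"
  proof -
    fix S and b :: 'a
    have "\<forall>s\<in>S. s \<le> mn (mult b (tld (Sup {mult s b | s. s \<in> S})))"
      using R1 by (metis (mono_tags, lifting) Sup_upper mem_Collect_eq)
    hence "Sup S \<le> mn (mult b (tld (Sup {mult s b | s. s \<in> S})))" by (simp add: Sup_least)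
    thus "mult (Sup S) b \<le> Sup {mult s b | s. s \<in> S}" using R1 by blast
  qed
  have supR: "\<And>S a. mult a (Sup S) \<le> Sup {mult a s | s. s \<in> S}"
  proof -
    fix S and a :: 'a
    have "\<forall>s\<in>S. s \<le> tld (mult (mn (Sup {mult a s | s. s \<in> S})) a)"
      using R2 by (metis (mono_tags, lifting) Sup_upper mem_Collect_eq)
    hence "Sup S \<le> tld (mult (mn (Sup {mult a s | s. s \<in> S})) a)" by (simp add: Sup_least)
    thus "mult a (Sup S) \<le> Sup {mult a s | s. s \<in> S}" using R2 by blast
  qed
  have bij: "bij_betw psi (UNIV :: 'a set) (Up Jinf plus_le)"
    unfolding bij_betw_def
  proof (intro conjI)
    show "inj (psi :: 'a \<Rightarrow> 'a set)"
    proof (rule injI)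
      fix x y :: 'a assume h: "psi x = psi y"
      have "x = Sup (psi x)" by (rule psiSup)
      also have "\<dots> = Sup (psi y)" using h by (rule arg_cong)
      also have "\<dots> = y" by (rule psiSup[symmetric])
      finally show "x = y" .
    qed
    show "range (psi :: 'a \<Rightarrow> 'a set) = Up Jinf plus_le"
    proof (rule set_eqI, rule iffI)
      fix U :: "'a set" assume "U \<in> range psi"
      thus "U \<in> Up Jinf plus_le" unfolding Up_def psi_def plus_le_def by auto
    next
      fix U :: "'a set" assume U: "U \<in> Up Jinf plus_le"
      have "psi (Sup U) = U"
      proof (rule set_eqI, rule iffI)
        fix j :: 'a assume "j \<in> psi (Sup U)"
        hence j: "cjirr j" "j \<le> Sup U" unfolding psi_def Jinf_def by auto
        then obtain u where "u \<in> U" "j \<le> u" using cjp[OF D P] by blast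
        thus "j \<in> U" using U j unfolding Up_def plus_le_def Jinf_def by auto
      next
        fix j :: 'a assume "j \<in> U"
        thus "j \<in> psi (Sup U)" using U unfolding Up_def psi_def by (auto intro: Sup_upper)
      qed
      thus "U \<in> range psi" by (metis rangeI)
    qed
  qed
  have pinf: "\<forall>a b::'a. psi (inf a b) = psi a \<inter> psi b" unfolding psi_def by auto
  have psup: "\<forall>a b::'a. psi (sup a b) = psi a \<union> psi b"
  proof (intro allI set_eqI iffI)
    fix a b j :: 'a assume "j \<in> psi (sup a b)"
    hence j: "cjirr j" "j \<le> Sup {a, b}" unfolding psi_def Jinf_def by auto
    then obtain s where "s \<in> {a,b}" "j \<le> s" using cjp[OF D P] by blast
    thus "j \<in> psi a \<union> psi b" using j unfolding psi_def Jinf_def by auto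
  next
    fix a b j :: 'a assume "j \<in> psi a \<union> psi b"
    thus "j \<in> psi (sup a b)" unfolding psi_def by (auto intro: le_supI1 le_supI2)
  qed
  have pmult: "\<forall>a b. psi (mult a b) = cx_comp (plus_comp mult) (psi a) (psi b)"
  proof (intro allI set_eqI iffI)
    fix a b c :: 'a assume "c \<in> psi (mult a b)"
    hence c: "cjirr c" "c \<le> mult a b" unfolding psi_def Jinf_def by auto
    have "mult a b \<le> Sup {mult s b | s. s \<in> psi a}" using supL[of "psi a" b] psiSup[of a] by simp
    then obtain x where x: "x \<in> psi a" "c \<le> mult x b"
      using cjp[OF D P c(1), of "{mult s b | s. s \<in> psi a}"] c(2) order_trans by blast
    have "mult x b \<le> Sup {mult x s | s. s \<in> psi b}" using supR[of x "psi b"] psiSup[of b] by simp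
    then obtain y where y: "y \<in> psi b" "c \<le> mult x y"
      using cjp[OF D P c(1), of "{mult x s | s. s \<in> psi b}"] x(2) order_trans by blast
    show "c \<in> cx_comp (plus_comp mult) (psi a) (psi b)"
      unfolding cx_comp_def plus_comp_def using x(1) y c(1) unfolding Jinf_def by blast
  next
    fix a b c :: 'a assume "c \<in> cx_comp (plus_comp mult) (psi a) (psi b)"
    then obtain x y where xy: "x \<in> psi a" "y \<in> psi b" "c \<in> Jinf" "c \<le> mult x y"
      unfolding cx_comp_def plus_comp_def by blast
    have "x \<le> a" "y \<le> b" using xy(1,2) unfolding psi_def by auto
    hence "mult x y \<le> mult a b" using monoL[of x a y] monoR[of y b a] by (rule_tac order_trans) auto
    thus "c \<in> psi (mult a b)" using xy unfolding psi_def by auto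
  qed
  have pe: "psi e = plus_I e" unfolding psi_def plus_I_def by simp
  show ?thesis
    using bij pinf psup pmult pe
      anti_neg[OF D P Gt tm mt] anti_neg[OF D P Gm mt tm] anti_neg[OF D P Gn ngng ngng]
    by blast
qed

end
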